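(* Let $n\ge 3$. The center of $U_n$ is $$Z(U_n)=\{(x_1+f(x_2,\dots,x_n),\,x_2,\dots,x_n)\mid f\in K\langle x_2,\dots,x_n\rangle,\ f(x_2+g_2,\dots,x_n+g_n)=f(x_2,\dots,x_n)\text{ for all } g_i\in K\langle x_{i+1},\dots,x_n\rangle\ (2\le i\le n-1),\ g_n\in K\}.$$
   Context: $K$ is a field of characteristic zero and $A_n=K\langle x_1,\dots,x_n\rangle$ is the free associative $K$-algebra with unity. $U_n$ is the group of unitriangular automorphisms of $A_n$: all $K$-automorphisms $(x_1+f_1,\dots,x_n+f_n)$, meaning $x_i\mapsto x_i+f_i$, with $f_i\in K\langle x_{i+1},\dots,x_n\rangle$ for $i<n$ and $f_n\in K$. *)

theory Defs
  imports Main
begin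

text \<open>Noncommutative polynomials (elements of the free associative algebra)
  over a field 'k, in variables x_i indexed by natural numbers, represented as
  coefficient functions on words (lists of variable indices) with finite support.\<close>

type_synonym 'k fpoly = "nat list \<Rightarrow> 'k"

definition supp :: "'k::zero fpoly \<Rightarrow> nat list set" where
  "supp p = {w. p w \<noteq> 0}"

definition in_vars :: "nat set \<Rightarrow> 'k::zero fpoly \<Rightarrow> bool" where
  "in_vars S p \<longleftrightarrow> finite (supp p) \<and> (\<forall>w \<in> supp p. set w \<subseteq> S)"

definition pvar :: "nat \<Rightarrow> 'k::{zero,one} fpoly" where
  "pvar i = (\<lambda>w. if w = [i] then 1 else 0)"

definition pone :: "'k::{zero,one} fpoly" where
  "pone = (\<lambda>w. if w = [] then 1 else 0)"

definition padd :: "'k::plus fpoly \<Rightarrow> 'k fpoly \<Rightarrow> 'k fpoly" where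
  "padd p q = (\<lambda>w. p w + q w)"

definition pmul :: "'k::comm_semiring_1 fpoly \<Rightarrow> 'k fpoly \<Rightarrow> 'k fpoly" where
  "pmul p q = (\<lambda>w. \<Sum>i\<le>length w. p (take i w) * q (drop i w))"

text \<open>Substitution x_i := phi i (the endomorphism determined by images of generators).\<close>
definition word_eval :: "(nat \<Rightarrow> 'k::comm_semiring_1 fpoly) \<Rightarrow> nat list \<Rightarrow> 'k fpoly" where
  "word_eval \<phi> w = foldr (\<lambda>i acc. pmul (\<phi> i) acc) w pone"

definition subst :: "(nat \<Rightarrow> 'k::comm_semiring_1 fpoly) \<Rightarrow> 'k fpoly \<Rightarrow> 'k fpoly" where
  "subst \<phi> p = (\<lambda>v. \<Sum>w\<in>supp p. p w * word_eval \<phi> w v)"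

text \<open>Composition of endomorphisms: (comp phi psi) corresponds to subst phi o subst psi.\<close>
definition comp_end :: "(nat \<Rightarrow> 'k::comm_semiring_1 fpoly) \<Rightarrow> (nat \<Rightarrow> 'k fpoly) \<Rightarrow> (nat \<Rightarrow> 'k fpoly)" where
  "comp_end \<phi> \<psi> = (\<lambda>i. subst \<phi> (\<psi> i))"

definition A :: "nat \<Rightarrow> 'k::zero fpoly set" where
  "A n = {p. in_vars {1..n} p}"

text \<open>U_n: unitriangular automorphisms (x_1+f_1,...,x_n+f_n), f_i in K<x_{i+1},...,x_n>,
  f_n in K; encoded by the images of the generators (and x_i fixed for i outside 1..n).\<close>
definition U :: "nat \<Rightarrow> (nat \<Rightarrow> 'k::field fpoly) set" where
  "U n = {\<phi>. (\<forall>i. i \<notin> {1..n} \<longrightarrow> \<phi> i = pvar i)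
            \<and> (\<forall>i\<in>{1..n}. \<exists>f. in_vars {i+1..n} f \<and> \<phi> i = padd (pvar i) f)
            \<and> bij_betw (subst \<phi>) (A n) (A n)}"

definition center_U :: "nat \<Rightarrow> (nat \<Rightarrow> 'k::field fpoly) set" where
  "center_U n = {\<phi> \<in> U n. \<forall>\<psi> \<in> U n. comp_end \<phi> \<psi> = comp_end \<psi> \<phi>}"

end

theory Submission imports Defs "HOL-Library.Poly_Mapping" begin

instantiation list :: (type) monoid_add
begin
definition zero_list_def: "0 = []"
definition plus_list_def: "(+) = (@)"
instance by standard (auto simp: zero_list_def plus_list_def)
end

definition P :: "'k::zero fpoly \<Rightarrow> (nat list \<Rightarrow>\<^sub>0 'k)" where
  "P p = Abs_poly_mapping p"

abbreviation fs :: "'k::zero fpoly \<Rightarrow> bool" where "fs p \<equiv> finite (supp p)"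

lemma lookup_P: "fs p \<Longrightarrow> Poly_Mapping.lookup (P p) = p"
  unfolding P_def supp_def by simp

lemma P_lookup[simp]: "P (Poly_Mapping.lookup x) = x"
  unfolding P_def by (simp add: lookup_inverse)

lemma fs_lookup[simp]: "fs (Poly_Mapping.lookup x)"
  unfolding supp_def by simp

lemma keys_P: "fs p \<Longrightarrow> Poly_Mapping.keys (P p) = supp p"
  unfolding keys.rep_eq supp_def by (simp add: lookup_P supp_def)

lemma splits_img: "(\<lambda>i. (take i w, drop i w)) ` {..length w} = {(a,b). a @ b = w}"
proof (rule set_eqI, rule iffI)
  fix x assume "x \<in> {(a,b). a @ b = w}"
  then obtain a b where x: "x = (a,b)" "a @ b = w" by auto
  then show "x \<in> (\<lambda>i. (take i w, drop i w)) ` {..length w}"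
    by (intro image_eqI[where x="length a"]) auto
qed auto

lemma pmul_alt: "pmul p q w = (\<Sum>(a,b)\<in>{(a,b). a @ b = w}. p a * q b)"
proof -
  have inj: "inj_on (\<lambda>i. (take i w, drop i w)) {..length w}"
  proof (rule inj_onI)
    fix i j assume "i \<in> {..length w}" "j \<in> {..length w}" "(take i w, drop i w) = (take j w, drop j w)"
    then have "length (take i w) = length (take j w)" by simp
    with \<open>i \<in> _\<close> \<open>j \<in> _\<close> show "i = j" by simp
  qed
  show ?thesis unfolding pmul_def
    by (subst splits_img[symmetric], subst sum.reindex[OF inj]) simp
qed

lemma finite_splits: "finite {(a,b). a @ b = (w::nat list)}"
  by (subst splits_img[symmetric]) simp

lemma pmul_P: 
  fixes p q :: "'k::comm_semiring_1 fpoly"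
  assumes "fs p" "fs q" shows "pmul p q = Poly_Mapping.lookup (P p * P q)"
proof
  fix w
  have fp: "finite {a. p a \<noteq> 0}" "finite {b. q b \<noteq> 0}" using assms unfolding supp_def by auto
  have "Poly_Mapping.lookup (P p * P q) w = prod_fun p q w"
    by (simp add: times_poly_mapping.rep_eq lookup_P assms)
  also have "\<dots> = (\<Sum>(a, b). p a * q b when w = a + b)"
    by (rule prod_fun_unfold_prod[OF fp])
  also have "\<dots> = (\<Sum>(a,b)\<in>{(a,b). a @ b = w}. p a * q b when w = a + b)"
    by (rule Sum_any.expand_superset[OF finite_splits]) (auto simp: plus_list_def when_def split: if_splits)
  also have "\<dots> = pmul p q w" unfolding pmul_alt
    by (rule sum.cong) (auto simp: plus_list_def)
  finally show "pmul p q w = Poly_Mapping.lookup (P p * P q) w" ..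
qed

lemma pone_eq: "pone = Poly_Mapping.lookup (1 :: nat list \<Rightarrow>\<^sub>0 'k::comm_semiring_1)"
  by (auto simp: pone_def lookup_one zero_list_def when_def)


type_synonym 'k pm = "nat list \<Rightarrow>\<^sub>0 'k"

definition sc :: "'k::comm_ring_1 \<Rightarrow> 'k pm" where
  "sc c = Poly_Mapping.single 0 c"

lemma lookup_sc_mult: "Poly_Mapping.lookup (sc c * x) v = c * Poly_Mapping.lookup x v"
  unfolding sc_def mult_map_scale_conv_mult[symmetric]
  by (simp add: map.rep_eq when_def)

lemma pm_expand: "x = (\<Sum>a\<in>Poly_Mapping.keys x. Poly_Mapping.single a (Poly_Mapping.lookup x a))"
proof (rule poly_mapping_eqI)
  fix k
  show "Poly_Mapping.lookup x k = Poly_Mapping.lookup (\<Sum>a\<in>Poly_Mapping.keys x. Poly_Mapping.single a (Poly_Mapping.lookup x a)) k"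
    by (simp add: lookup_sum lookup_single when_def in_keys_iff)
qed

lemma sc_comm: "sc c * x = x * (sc c :: 'k::comm_ring_1 pm)"
proof -
  have "sc c * x = (\<Sum>a\<in>Poly_Mapping.keys x. sc c * Poly_Mapping.single a (Poly_Mapping.lookup x a))"
    by (subst pm_expand[of x]) (simp add: sum_distrib_left)
  also have "\<dots> = (\<Sum>a\<in>Poly_Mapping.keys x. Poly_Mapping.single a (Poly_Mapping.lookup x a) * sc c)"
    by (rule sum.cong) (simp_all add: sc_def mult_single mult.commute)
  also have "\<dots> = x * sc c"
    by (subst (2) pm_expand[of x]) (simp add: sum_distrib_right)
  finally show ?thesis .
qed

lemma sc_mult: "sc (a * b) = sc a * sc b"
  by (simp add: sc_def mult_single)

lemma sc_add: "sc (a + b) = sc a + sc b"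
  by (simp add: sc_def single_add)

lemma sc_0[simp]: "sc 0 = 0" by (simp add: sc_def)
lemma sc_1[simp]: "sc 1 = 1" by (simp add: sc_def)

definition ev :: "(nat \<Rightarrow> 'k::comm_ring_1 pm) \<Rightarrow> nat list \<Rightarrow> 'k pm" where
  "ev \<Phi> w = foldr (\<lambda>i acc. \<Phi> i * acc) w 1"

lemma ev_Nil[simp]: "ev \<Phi> [] = 1" by (simp add: ev_def)
lemma ev_Cons[simp]: "ev \<Phi> (i # w) = \<Phi> i * ev \<Phi> w" by (simp add: ev_def)
lemma ev_append: "ev \<Phi> (u @ v) = ev \<Phi> u * ev \<Phi> v"
  by (induct u) (simp_all add: mult.assoc)

definition S :: "(nat \<Rightarrow> 'k::comm_ring_1 pm) \<Rightarrow> 'k pm \<Rightarrow> 'k pm" where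
  "S \<Phi> x = (\<Sum>w\<in>Poly_Mapping.keys x. sc (Poly_Mapping.lookup x w) * ev \<Phi> w)"

lemma S_superset: "finite B \<Longrightarrow> Poly_Mapping.keys x \<subseteq> B \<Longrightarrow>
   S \<Phi> x = (\<Sum>w\<in>B. sc (Poly_Mapping.lookup x w) * ev \<Phi> w)"
  unfolding S_def by (rule sum.mono_neutral_left) (auto simp: in_keys_iff)

lemma S_add: "S \<Phi> (x + y) = S \<Phi> x + S \<Phi> y"
proof -
  let ?A = "Poly_Mapping.keys x \<union> Poly_Mapping.keys y"
  have "S \<Phi> (x + y) = (\<Sum>w\<in>?A. sc (Poly_Mapping.lookup (x+y) w) * ev \<Phi> w)"
    by (rule S_superset) (auto simp: keys_add)
  also have "\<dots> = (\<Sum>w\<in>?A. sc (Poly_Mapping.lookup x w) * ev \<Phi> w) + (\<Sum>w\<in>?A. sc (Poly_Mapping.lookup y w) * ev \<Phi> w)"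
    by (simp add: lookup_add sc_add distrib_right sum.distrib)
  also have "\<dots> = S \<Phi> x + S \<Phi> y"
    by (simp add: S_superset[symmetric])
  finally show ?thesis .
qed

lemma S_zero[simp]: "S \<Phi> 0 = 0" by (simp add: S_def)

lemma S_sum: "S \<Phi> (sum f I) = (\<Sum>i\<in>I. S \<Phi> (f i))"
  by (induct I rule: infinite_finite_induct) (simp_all add: S_add)

lemma S_single: "S \<Phi> (Poly_Mapping.single w c) = sc c * ev \<Phi> w"
  by (simp add: S_def)

lemma S_mult: "S \<Phi> (x * y) = S \<Phi> x * S \<Phi> y"
proof -
  have xy: "x * y = (\<Sum>a\<in>Poly_Mapping.keys x. \<Sum>b\<in>Poly_Mapping.keys y.
      Poly_Mapping.single (a @ b) (Poly_Mapping.lookup x a * Poly_Mapping.lookup y b))"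
    by (subst pm_expand[of x], subst pm_expand[of y])
       (simp add: sum_distrib_left sum_distrib_right mult_single plus_list_def, rule sum.swap)
  have "S \<Phi> (x * y) = (\<Sum>a\<in>Poly_Mapping.keys x. \<Sum>b\<in>Poly_Mapping.keys y.
      sc (Poly_Mapping.lookup x a) * ev \<Phi> a * (sc (Poly_Mapping.lookup y b) * ev \<Phi> b))"
    unfolding xy S_sum S_single
    by (intro sum.cong refl) (simp add: sc_mult ev_append mult.assoc, metis (no_types) mult.assoc sc_comm)
  also have "\<dots> = S \<Phi> x * S \<Phi> y"
    by (simp add: S_def sum_distrib_left sum_distrib_right) (rule sum.swap)
  finally show ?thesis .
qed

lemma S_one[simp]: "S \<Phi> 1 = 1"
  by (metis S_single ev_Nil mult_1 sc_1 sc_def single_one zero_list_def)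

lemma S_sc[simp]: "S \<Phi> (sc c) = sc c"
  by (metis S_single ev_Nil mult_1_right sc_def zero_list_def)

lemma S_ev: "S \<Phi> (ev \<Psi> w) = ev (\<lambda>i. S \<Phi> (\<Psi> i)) w"
  by (induct w) (simp_all add: S_mult)

lemma S_comp: "S \<Phi> (S \<Psi> x) = S (\<lambda>i. S \<Phi> (\<Psi> i)) x"
  unfolding S_def[of \<Psi> x] S_sum S_mult S_sc S_ev by (simp add: S_def[of "\<lambda>i. S \<Phi> (\<Psi> i)" x])


lemma word_eval_ev: "(\<And>i. fs (\<phi> i)) \<Longrightarrow> word_eval \<phi> w = Poly_Mapping.lookup (ev (\<lambda>i. P (\<phi> i)) w)"
proof (induct w)
  case Nil then show ?case by (simp add: word_eval_def pone_eq)
next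
  case (Cons i w)
  have "word_eval \<phi> (i # w) = pmul (\<phi> i) (word_eval \<phi> w)" by (simp add: word_eval_def)
  also have "\<dots> = Poly_Mapping.lookup (P (\<phi> i) * ev (\<lambda>i. P (\<phi> i)) w)"
    using Cons by (simp add: pmul_P)
  finally show ?case by simp
qed

lemma subst_S: "fs p \<Longrightarrow> (\<And>i. fs (\<phi> i)) \<Longrightarrow> subst \<phi> p = Poly_Mapping.lookup (S (\<lambda>i. P (\<phi> i)) (P p))"
  by (rule ext) (simp add: subst_def S_def keys_P lookup_sum lookup_sc_mult lookup_P word_eval_ev)

lemma fs_subst: 
  fixes p :: "'k::comm_ring_1 fpoly"
  assumes "fs p" "\<And>i. fs (\<phi> i)" shows "fs (subst \<phi> p)"
  by (simp add: subst_S[OF assms])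

lemma subst_comp:
  fixes p :: "'k::comm_ring_1 fpoly"
  assumes "fs p" "\<And>i. fs (\<phi> i)" "\<And>i. fs (\<psi> i)"
  shows "subst \<phi> (subst \<psi> p) = subst (comp_end \<phi> \<psi>) p"
proof -
  have c: "P (comp_end \<phi> \<psi> i) = S (\<lambda>i. P (\<phi> i)) (P (\<psi> i))" for i
    by (simp add: comp_end_def subst_S assms)
  have fc: "fs (comp_end \<phi> \<psi> i)" for i by (simp add: comp_end_def fs_subst assms)
  show ?thesis using assms
    by (simp add: subst_S fs_subst fc c S_comp)
qed


definition pneg :: "'k::comm_ring_1 fpoly \<Rightarrow> 'k fpoly" where
  "pneg p = (\<lambda>w. - p w)"

definition pzero :: "'k::comm_ring_1 fpoly" where "pzero = (\<lambda>w. 0)"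

lemma supp_pvar[simp]: "supp (pvar i :: 'k::comm_ring_1 fpoly) = {[i]}"
  by (auto simp: supp_def pvar_def)

lemma supp_padd: "supp (padd p q :: 'k::comm_ring_1 fpoly) \<subseteq> supp p \<union> supp q"
  by (auto simp: supp_def padd_def)

lemma supp_pneg[simp]: "supp (pneg p) = supp p"
  by (auto simp: supp_def pneg_def)

lemma supp_pzero[simp]: "supp pzero = {}" by (simp add: supp_def pzero_def)

lemma fs_padd: "fs p \<Longrightarrow> fs q \<Longrightarrow> fs (padd p q :: 'k::comm_ring_1 fpoly)"
  by (meson finite_Un finite_subset supp_padd)

lemma in_vars_fs: "in_vars T p \<Longrightarrow> fs p" by (simp add: in_vars_def)

lemma in_vars_mono: "in_vars T p \<Longrightarrow> T \<subseteq> T' \<Longrightarrow> in_vars T' p"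
  by (auto simp: in_vars_def)

lemma in_vars_padd: "in_vars T p \<Longrightarrow> in_vars T q \<Longrightarrow> in_vars T (padd p q :: 'k::comm_ring_1 fpoly)"
  unfolding in_vars_def using supp_padd fs_padd by blast

lemma in_vars_pvar: "i \<in> T \<Longrightarrow> in_vars T (pvar i :: 'k::comm_ring_1 fpoly)"
  by (simp add: in_vars_def)

lemma in_vars_pneg: "in_vars T (pneg p) = in_vars T p"
  by (simp add: in_vars_def)

lemma in_vars_pzero: "in_vars T pzero"
  by (simp add: in_vars_def)

lemma padd_pzero[simp]: "padd p pzero = p" by (simp add: padd_def pzero_def)

lemma P_padd:
  assumes a: "fs p" and b: "fs q"
  shows "P (padd p q :: 'k::comm_ring_1 fpoly) = P p + P q"
  by (rule poly_mapping_eqI) (simp add: lookup_add lookup_P[OF fs_padd[OF a b]] lookup_P[OF a] lookup_P[OF b], simp add: padd_def)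

lemma fs_pvar[simp]: "fs (pvar i :: 'k::comm_ring_1 fpoly)" by simp

lemma P_pvar: "P (pvar i :: 'k::comm_ring_1 fpoly) = Poly_Mapping.single [i] 1"
  by (rule poly_mapping_eqI) (simp add: lookup_P[OF fs_pvar], simp add: lookup_single when_def pvar_def)

lemma subst_padd:
  fixes p q :: "'k::comm_ring_1 fpoly"
  assumes a: "fs p" and b: "fs q" and c: "\<And>i. fs (\<phi> i)"
  shows "subst \<phi> (padd p q) = padd (subst \<phi> p) (subst \<phi> q)"
  unfolding subst_S[OF fs_padd[OF a b] c] subst_S[OF a c] subst_S[OF b c] P_padd[OF a b] S_add
  by (simp add: lookup_add padd_def fun_eq_iff)

lemma subst_pvar:
  assumes c: "\<And>i. fs (\<phi> i)"
  shows "subst \<phi> (pvar i :: 'k::comm_ring_1 fpoly) = \<phi> i"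
  by (simp add: subst_S[OF fs_pvar c] P_pvar S_single lookup_P[OF c])

lemma subst_pneg: "subst \<phi> (pneg p) = pneg (subst \<phi> p)"
  unfolding subst_def supp_pneg by (simp add: pneg_def fun_eq_iff sum_negf)

lemma subst_cong: "(\<And>w i. w \<in> supp p \<Longrightarrow> i \<in> set w \<Longrightarrow> \<phi> i = \<phi>' i) \<Longrightarrow> subst \<phi> p = subst \<phi>' p"
proof -
  assume h: "\<And>w i. w \<in> supp p \<Longrightarrow> i \<in> set w \<Longrightarrow> \<phi> i = \<phi>' i"
  have "word_eval \<phi> w = word_eval \<phi>' w" if "w \<in> supp p" for w
    unfolding word_eval_def by (rule foldr_cong) (auto simp: h[OF that])
  then show ?thesis unfolding subst_def by (simp cong: sum.cong)
qed

lemma ev_pvars: "(\<And>i. i \<in> set w \<Longrightarrow> \<Phi> i = Poly_Mapping.single [i] 1) \<Longrightarrow>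
   ev \<Phi> w = Poly_Mapping.single w (1::'k::comm_ring_1)"
proof (induct w)
  case Nil then show ?case by (metis ev_Nil single_one zero_list_def)
next
  case (Cons a w) then show ?case by (simp add: mult_single plus_list_def)
qed

lemma subst_fix:
  fixes p :: "'k::comm_ring_1 fpoly"
  assumes "fs p" "\<And>i. fs (\<phi> i)" "\<And>w i. w \<in> supp p \<Longrightarrow> i \<in> set w \<Longrightarrow> \<phi> i = pvar i"
  shows "subst \<phi> p = p"
proof -
  have "S (\<lambda>i. P (\<phi> i)) (P p) = (\<Sum>a\<in>Poly_Mapping.keys (P p). Poly_Mapping.single a (Poly_Mapping.lookup (P p) a))"
    unfolding S_def
  proof (rule sum.cong[OF refl])
    fix w assume w: "w \<in> Poly_Mapping.keys (P p)"
    have "ev (\<lambda>i. P (\<phi> i)) w = Poly_Mapping.single w 1"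
      by (rule ev_pvars) (use w assms in \<open>simp add: keys_P P_pvar\<close>)
    then show "sc (Poly_Mapping.lookup (P p) w) * ev (\<lambda>i. P (\<phi> i)) w = Poly_Mapping.single w (Poly_Mapping.lookup (P p) w)"
      by (simp add: sc_def mult_single plus_list_def zero_list_def)
  qed
  have "subst \<phi> p = Poly_Mapping.lookup (S (\<lambda>i. P (\<phi> i)) (P p))" by (rule subst_S[OF assms(1,2)])
  also have "\<dots> = Poly_Mapping.lookup (P p)" unfolding \<open>S _ (P p) = _\<close> by (simp only: pm_expand[of "P p", symmetric])
  also have "\<dots> = p" by (rule lookup_P[OF assms(1)])
  finally show ?thesis .
qed

definition L :: "nat set \<Rightarrow> nat list set" where "L T = {w. set w \<subseteq> T}"

lemma keys_mult_L:
  assumes "Poly_Mapping.keys x \<subseteq> L T" "Poly_Mapping.keys y \<subseteq> L T"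
  shows "Poly_Mapping.keys (x * y) \<subseteq> L T"
proof
  fix w assume "w \<in> Poly_Mapping.keys (x * y)"
  then obtain a b where "w = a @ b" "a \<in> Poly_Mapping.keys x" "b \<in> Poly_Mapping.keys y"
    using keys_mult[of x y] by (auto simp: plus_list_def)
  then show "w \<in> L T" using assms by (auto simp: L_def)
qed

lemma keys_ev_L: "(\<And>i. i \<in> set w \<Longrightarrow> Poly_Mapping.keys (\<Phi> i) \<subseteq> L T) \<Longrightarrow> Poly_Mapping.keys (ev \<Phi> w) \<subseteq> L (T::nat set)"
proof (induct w)
  case Nil then show ?case by (simp add: L_def zero_list_def)
next
  case (Cons a w) then show ?case by (simp add: keys_mult_L)
qed

lemma keys_sc_L: "Poly_Mapping.keys y \<subseteq> L T \<Longrightarrow> Poly_Mapping.keys (sc c * y) \<subseteq> L T"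
  by (rule keys_mult_L) (auto simp: sc_def L_def zero_list_def)

lemma in_vars_keys: "in_vars T p \<longleftrightarrow> fs p \<and> Poly_Mapping.keys (P p) \<subseteq> L T"
  by (auto simp: in_vars_def keys_P L_def)

lemma in_vars_subst:
  fixes p :: "'k::comm_ring_1 fpoly"
  assumes "in_vars T p" "\<And>i. fs (\<phi> i)" "\<And>i. i \<in> T \<Longrightarrow> in_vars T' (\<phi> i)"
  shows "in_vars T' (subst \<phi> p)"
proof -
  have fp: "fs p" using assms(1) by (simp add: in_vars_def)
  have "Poly_Mapping.keys (S (\<lambda>i. P (\<phi> i)) (P p)) \<subseteq> L T'"
    unfolding S_def
  proof (rule order_trans[OF keys_sum], rule UN_least)
    fix w assume w: "w \<in> Poly_Mapping.keys (P p)"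
    then have "set w \<subseteq> T" using assms(1) by (auto simp: in_vars_def keys_P[OF fp])
    then show "Poly_Mapping.keys (sc (Poly_Mapping.lookup (P p) w) * ev (\<lambda>i. P (\<phi> i)) w) \<subseteq> L T'"
      using assms(3) by (intro keys_sc_L keys_ev_L) (auto simp: in_vars_keys)
  qed
  then show ?thesis using assms fp by (simp add: in_vars_keys subst_S fs_subst)
qed




lemma bij_inv:
  fixes \<phi> \<phi>' :: "nat \<Rightarrow> 'k::comm_ring_1 fpoly"
  assumes f1: "\<And>i. fs (\<phi> i)" and f2: "\<And>i. fs (\<phi>' i)"
    and v1: "\<And>i. i \<in> {1..n} \<Longrightarrow> in_vars {1..n} (\<phi> i)"
    and v2: "\<And>i. i \<in> {1..n} \<Longrightarrow> in_vars {1..n} (\<phi>' i)"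
    and c1: "\<And>i. i \<in> {1..n} \<Longrightarrow> comp_end \<phi> \<phi>' i = pvar i"
    and c2: "\<And>i. i \<in> {1..n} \<Longrightarrow> comp_end \<phi>' \<phi> i = pvar i"
  shows "bij_betw (subst \<phi>) (A n) (A n)"
proof (rule bij_betw_byWitness[where f'="subst \<phi>'"])
  have fc: "fs (comp_end a b i)" if "\<And>i. fs (a i)" "\<And>i. fs (b i)" for a b :: "nat \<Rightarrow> 'k fpoly" and i
    by (simp add: comp_end_def fs_subst that)
  show "\<forall>a\<in>A n. subst \<phi>' (subst \<phi> a) = a"
  proof
    fix a :: "'k fpoly" assume a: "a \<in> A n"
    then have fa: "fs a" and va: "in_vars {1..n} a" by (auto simp: A_def in_vars_def)
    have "subst \<phi>' (subst \<phi> a) = subst (comp_end \<phi>' \<phi>) a" by (rule subst_comp[OF fa f2 f1])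
    also have "\<dots> = a"
      by (rule subst_fix[OF fa fc[OF f2 f1]]) (metis c2 subsetD va in_vars_def)
    finally show "subst \<phi>' (subst \<phi> a) = a" .
  qed
  show "\<forall>a\<in>A n. subst \<phi> (subst \<phi>' a) = a"
  proof
    fix a :: "'k fpoly" assume a: "a \<in> A n"
    then have fa: "fs a" and va: "in_vars {1..n} a" by (auto simp: A_def in_vars_def)
    have "subst \<phi> (subst \<phi>' a) = subst (comp_end \<phi> \<phi>') a" by (rule subst_comp[OF fa f1 f2])
    also have "\<dots> = a"
      by (rule subst_fix[OF fa fc[OF f1 f2]]) (metis c1 subsetD va in_vars_def)
    finally show "subst \<phi> (subst \<phi>' a) = a" .
  qed
  show "subst \<phi> ` A n \<subseteq> A n"
  proof
    fix y assume "y \<in> subst \<phi> ` A n"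
    then obtain a where a: "a \<in> A n" "y = subst \<phi> a" by auto
    have "in_vars {1..n} (subst \<phi> a)" by (rule in_vars_subst[OF _ f1 v1]) (use a in \<open>auto simp: A_def\<close>)
    then show "y \<in> A n" using a by (simp add: A_def)
  qed
  show "subst \<phi>' ` A n \<subseteq> A n"
  proof
    fix y assume "y \<in> subst \<phi>' ` A n"
    then obtain a where a: "a \<in> A n" "y = subst \<phi>' a" by auto
    have "in_vars {1..n} (subst \<phi>' a)" by (rule in_vars_subst[OF _ f2 v2]) (use a in \<open>auto simp: A_def\<close>)
    then show "y \<in> A n" using a by (simp add: A_def)
  qed
qed

definition E :: "nat \<Rightarrow> 'k::comm_ring_1 fpoly \<Rightarrow> nat \<Rightarrow> 'k fpoly" where
  "E i g = (\<lambda>j. if j = i then padd (pvar i) g else pvar j)"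

lemma fs_E: "fs g \<Longrightarrow> fs (E i g j)"
  by (simp add: E_def fs_padd)

lemma E_same[simp]: "E i h i = padd (pvar i) h" by (simp add: E_def)
lemma E_other[simp]: "j \<noteq> i \<Longrightarrow> E i h j = pvar j" by (simp add: E_def)

lemma subst_fix_vars:
  fixes p :: "'k::comm_ring_1 fpoly"
  assumes "in_vars T p" "\<And>i. fs (\<phi> i)" "\<And>j. j \<in> T \<Longrightarrow> \<phi> j = pvar j"
  shows "subst \<phi> p = p"
  by (rule subst_fix) (use assms in \<open>auto simp: in_vars_def\<close>)

lemma subst_E_pvar:
  fixes h1 h2 :: "'k::comm_ring_1 fpoly"
  assumes "fs h1" "in_vars T h2" "i \<notin> T"
  shows "subst (E i h1) (padd (pvar i) h2) = padd (padd (pvar i) h1) h2"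
proof -
  have fe: "\<And>j. fs (E i h1 j)" using fs_E[OF assms(1)] .
  have f2: "fs h2" using assms(2) by (rule in_vars_fs)
  have "subst (E i h1) h2 = h2"
    by (rule subst_fix_vars[OF assms(2) fe]) (use assms(3) in \<open>metis E_other\<close>)
  moreover have "subst (E i h1) (pvar i) = padd (pvar i) h1"
    by (simp add: subst_pvar[OF fe])
  ultimately show ?thesis
    by (simp add: subst_padd[OF fs_pvar f2 fe])
qed

lemma subst_E_other: "j \<noteq> i \<Longrightarrow> fs h \<Longrightarrow> subst (E i h) (pvar j :: 'k::comm_ring_1 fpoly) = pvar j"
  by (simp add: subst_pvar[OF fs_E])

lemma E_bij:
  fixes g :: "'k::comm_ring_1 fpoly"
  assumes i: "i \<in> {1..n}" and g: "in_vars T g" and iT: "i \<notin> T" and Tn: "T \<subseteq> {1..n}"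
  shows "bij_betw (subst (E i g)) (A n) (A n)"
proof -
  have fg: "fs g" using g by (simp add: in_vars_def)
  have c1: "comp_end (E i g) (E i (pneg g)) j = pvar j" for j
  proof (cases "j = i")
    case True
    have "subst (E i g) (padd (pvar i) (pneg g)) = padd (padd (pvar i) g) (pneg g)"
      by (rule subst_E_pvar[OF fg _ iT]) (simp add: in_vars_pneg g)
    then show ?thesis using True by (simp add: comp_end_def padd_def pneg_def)
  next
    case False then show ?thesis by (simp add: comp_end_def subst_E_other fg)
  qed
  have c2: "comp_end (E i (pneg g)) (E i g) j = pvar j" for j
  proof (cases "j = i")
    case True
    have "subst (E i (pneg g)) (padd (pvar i) g) = padd (padd (pvar i) (pneg g)) g"
      by (rule subst_E_pvar[OF _ g iT]) (simp add: fg)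
    then show ?thesis using True by (simp add: comp_end_def padd_def pneg_def)
  next
    case False then show ?thesis by (simp add: comp_end_def subst_E_other fg)
  qed
  have v: "in_vars {1..n} (E i h j)" if "in_vars T h" "j \<in> {1..n}" for h j
    using that i Tn by (cases "j = i") (auto intro!: in_vars_padd in_vars_pvar elim: in_vars_mono)
  have gn: "in_vars T (pneg g)" by (simp add: in_vars_pneg g)
  have fgn: "fs (pneg g)" using gn by (rule in_vars_fs)
  show ?thesis
    by (rule bij_inv[where \<phi>'="E i (pneg g)"])
       (use fg fgn c1 c2 v[OF g] v[OF gn] in \<open>auto simp: fs_E\<close>)
qed

definition Tri :: "nat \<Rightarrow> nat \<Rightarrow> (nat \<Rightarrow> 'k::comm_ring_1 fpoly) \<Rightarrow> nat \<Rightarrow> 'k fpoly" where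
  "Tri n k g = (\<lambda>i. if i \<in> {k..n} then padd (pvar i) (g i) else pvar i)"

lemma Tri_step:
  fixes g :: "nat \<Rightarrow> 'k::comm_ring_1 fpoly"
  assumes "\<forall>j\<in>{k..n}. in_vars {j+1..n} (g j)" "k \<le> n"
  shows "Tri n k g = comp_end (E k (g k)) (Tri n (Suc k) g)"
proof
  fix i
  have fk: "fs (g k)" using assms by (auto simp: in_vars_def)
  show "Tri n k g i = comp_end (E k (g k)) (Tri n (Suc k) g) i"
  proof (cases "i \<in> {Suc k..n}")
    case True
    then have gi: "in_vars {i+1..n} (g i)" using assms by auto
    have vi: "in_vars {i..n} (padd (pvar i) (g i))"
      using True gi by (auto intro!: in_vars_padd in_vars_pvar elim: in_vars_mono)
    have "subst (E k (g k)) (padd (pvar i) (g i)) = padd (pvar i) (g i)"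
      by (rule subst_fix_vars[OF vi fs_E[OF fk]]) (use True in auto)
    then show ?thesis using True by (simp add: Tri_def comp_end_def)
  next
    case False
    then show ?thesis using assms(2)
      by (cases "i = k") (auto simp: Tri_def comp_end_def subst_E_other fk subst_pvar[OF fs_E[OF fk]])
  qed
qed

lemma tri_bij_aux:
  fixes g :: "nat \<Rightarrow> 'k::comm_ring_1 fpoly"
  shows "\<forall>k. n + 1 - k = d \<longrightarrow> k \<ge> 1 \<longrightarrow> (\<forall>j\<in>{k..n}. in_vars {j+1..n} (g j)) \<longrightarrow>
     bij_betw (subst (Tri n k g)) (A n) (A n)"
proof (induct d)
  case 0
  show ?case
  proof (intro allI impI)
    fix k assume "n + 1 - k = 0"
    then have T: "Tri n k g = pvar" by (auto simp: Tri_def fun_eq_iff)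
    have "bij_betw (subst (Tri n k g)) (A n) (A n) = bij_betw (id :: 'k fpoly \<Rightarrow> _) (A n) (A n)"
      by (rule bij_betw_cong) (auto simp: T A_def in_vars_def intro!: subst_fix)
    then show "bij_betw (subst (Tri n k g)) (A n) (A n)" by simp
  qed
next
  case (Suc d)
  show ?case
  proof (intro allI impI)
    fix k assume d: "n + 1 - k = Suc d" and k1: "k \<ge> 1" and g: "\<forall>j\<in>{k..n}. in_vars {j+1..n} (g j)"
    then have kn: "k \<le> n" by auto
    have b1: "bij_betw (subst (Tri n (Suc k) g)) (A n) (A n)"
      using Suc d k1 g by auto
    have b2: "bij_betw (subst (E k (g k))) (A n) (A n)"
      by (rule E_bij[where T="{k+1..n}"]) (use g kn k1 in auto)
    have fT: "fs (Tri n (Suc k) g i)" for i using g by (auto simp: Tri_def in_vars_def fs_padd)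
    have fk: "fs (g k)" using g kn by (auto simp: in_vars_def)
    have "bij_betw (subst (Tri n k g)) (A n) (A n) = bij_betw (subst (E k (g k)) \<circ> subst (Tri n (Suc k) g)) (A n) (A n)"
      by (rule bij_betw_cong) 
         (auto simp: Tri_step[OF g kn] A_def in_vars_def subst_comp fT fs_E fk)
    then show "bij_betw (subst (Tri n k g)) (A n) (A n)"
      using bij_betw_trans[OF b1 b2] by simp
  qed
qed

lemma tri_bij:
  fixes g :: "nat \<Rightarrow> 'k::comm_ring_1 fpoly"
  shows "k \<ge> 1 \<Longrightarrow> \<forall>j\<in>{k..n}. in_vars {j+1..n} (g j) \<Longrightarrow> bij_betw (subst (Tri n k g)) (A n) (A n)"
  using tri_bij_aux by blast


lemma U_fs: 
  fixes \<phi> :: "nat \<Rightarrow> 'k::field fpoly"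
  assumes "\<phi> \<in> U n" shows "fs (\<phi> i)"
proof (cases "i \<in> {1..n}")
  case True
  then obtain f where "in_vars {i+1..n} f" "\<phi> i = padd (pvar i) f" using assms unfolding U_def by blast
  then show ?thesis using fs_padd[OF fs_pvar in_vars_fs] by metis
next
  case False then show ?thesis using assms unfolding U_def by auto
qed

lemma U_get: "\<phi> \<in> U n \<Longrightarrow> \<exists>F. \<forall>i\<in>{1..n}. in_vars {i+1..n} (F i) \<and> \<phi> i = padd (pvar i) (F i)"
  unfolding U_def by (auto intro: bchoice)

lemma U_out: "\<phi> \<in> U n \<Longrightarrow> i \<notin> {1..n} \<Longrightarrow> \<phi> i = pvar i"
  unfolding U_def by auto

lemma padd_cancel: "padd (pvar i) a = padd (pvar i) b \<Longrightarrow> a = (b :: 'k::comm_ring_1 fpoly)"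
  by (auto simp: padd_def fun_eq_iff)

theorem theorem3:
  fixes n :: nat
  assumes "n \<ge> 3"
  shows "(center_U n :: (nat \<Rightarrow> 'k::field_char_0 fpoly) set) =
    {\<phi>. \<exists>f. in_vars {2..n} f
          \<and> (\<forall>g. ((\<forall>i\<in>{2..n-1}. in_vars {i+1..n} (g i)) \<and> in_vars {} (g n))
                 \<longrightarrow> subst (\<lambda>i. if i \<in> {2..n} then padd (pvar i) (g i) else pvar i) f = f)
          \<and> \<phi> = (\<lambda>i. if i = 1 then padd (pvar 1) f else pvar i)}"
  (is "_ = ?R")
proof
  show "center_U n \<subseteq> ?R"
  proof
    fix \<phi> :: "nat \<Rightarrow> 'k fpoly"
    assume c: "\<phi> \<in> center_U n"
    then have U: "\<phi> \<in> U n" and comm: "\<And>\<psi>. \<psi> \<in> U n \<Longrightarrow> comp_end \<phi> \<psi> = comp_end \<psi> \<phi>"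
      by (auto simp: center_U_def)
    obtain F where F: "\<And>i. i \<in> {1..n} \<Longrightarrow> in_vars {i+1..n} (F i) \<and> \<phi> i = padd (pvar i) (F i)"
      using U_get[OF U] by blast
    have fphi: "\<And>i. fs (\<phi> i)" using U_fs[OF U] .
    have n1: "1 \<in> {1..n}" using assms by auto
    have F1: "in_vars {2..n} (F 1)" and phi1: "\<phi> 1 = padd (pvar 1) (F 1)" using F[OF n1] by (auto simp: numeral_2_eq_2)
    have fF1: "fs (F 1)" using F1 by (simp add: in_vars_def)
    have n12: "(1::nat) \<notin> {2..n}" by simp
    have F1av: "\<And>w. w \<in> supp (F 1) \<Longrightarrow> 1 \<notin> set w" using F1 n12 unfolding in_vars_def by blast
    have step1: "\<phi> j = pvar j" if j: "j \<in> {2..n}" for j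
    proof -
      define \<psi> where "\<psi> = E 1 (pvar j :: 'k fpoly)"
      have fpsi: "fs (\<psi> i)" for i by (simp add: \<psi>_def fs_E)
      have "\<psi> \<in> U n"
        unfolding U_def
      proof (intro CollectI conjI ballI allI impI)
        fix i assume "i \<notin> {1..n}" then show "\<psi> i = pvar i" using n1 by (auto simp: \<psi>_def)
      next
        fix i assume i: "i \<in> {1..n}"
        show "\<exists>f. in_vars {i + 1..n} f \<and> \<psi> i = padd (pvar i) f"
        proof (cases "i = 1")
          case True then show ?thesis using j 
            by (intro exI[of _ "pvar j"]) (auto simp: \<psi>_def numeral_2_eq_2 intro!: in_vars_pvar)
        next
          case False then show ?thesis
            by (intro exI[of _ pzero]) (auto simp: \<psi>_def E_def in_vars_pzero)
        qed
      next
        show "bij_betw (subst \<psi>) (A n) (A n)" unfolding \<psi>_def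
          by (rule E_bij[where T="{j}"]) (use j n1 in \<open>auto intro: in_vars_pvar\<close>)
      qed
      then have eq: "comp_end \<phi> \<psi> 1 = comp_end \<psi> \<phi> 1" using comm by simp
      have l: "comp_end \<phi> \<psi> 1 = padd (\<phi> 1) (\<phi> j)"
        by (simp only: comp_end_def \<psi>_def E_same subst_padd[OF fs_pvar fs_pvar fphi] subst_pvar[OF fphi])
      have "comp_end \<psi> \<phi> 1 = subst (E 1 (pvar j)) (padd (pvar 1) (F 1))"
        by (simp only: comp_end_def \<psi>_def phi1)
      also have "\<dots> = padd (padd (pvar 1) (pvar j)) (F 1)"
        by (rule subst_E_pvar[OF fs_pvar F1 n12])
      finally have r: "comp_end \<psi> \<phi> 1 = padd (padd (pvar 1) (pvar j)) (F 1)" .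
      have Fj: "\<phi> j = padd (pvar j) (F j)" using F j by auto
      have "F j = pzero"
      proof
        fix w
        have e: "padd (padd (pvar 1) (F 1)) (padd (pvar j) (F j)) = padd (padd (pvar 1) (pvar j)) (F 1)"
          using eq l r unfolding phi1 Fj by simp
        show "F j w = pzero w" using fun_cong[OF e, of w] by (simp add: padd_def pzero_def)
      qed
      then show ?thesis using Fj by simp
    qed
    have phi_eq: "\<phi> = (\<lambda>i. if i = 1 then padd (pvar 1) (F 1) else pvar i)"
    proof
      fix i show "\<phi> i = (if i = 1 then padd (pvar 1) (F 1) else pvar i)"
        using phi1 step1 U_out[OF U, of i] by (cases "i \<in> {2..n}") auto
    qed
    have inv: "subst (\<lambda>i. if i \<in> {2..n} then padd (pvar i) (g i) else pvar i) (F 1) = F 1"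
      if g: "(\<forall>i\<in>{2..n-1}. in_vars {i+1..n} (g i)) \<and> in_vars {} (g n)" for g
    proof -
      define \<psi> where "\<psi> = Tri n 2 g"
      have gall: "\<forall>j\<in>{2..n}. in_vars {j+1..n} (g j)"
      proof
        fix j assume j: "j \<in> {2..n}"
        show "in_vars {j+1..n} (g j)"
        proof (cases "j = n")
          case True then show ?thesis using g by (auto elim: in_vars_mono)
        next
          case False then show ?thesis using g j by auto
        qed
      qed
      have fpsi: "fs (\<psi> i)" for i using gall by (auto simp: \<psi>_def Tri_def in_vars_def fs_padd)
      have "\<psi> \<in> U n"
        unfolding U_def
      proof (intro CollectI conjI ballI allI impI)
        fix i assume "i \<notin> {1..n}" then show "\<psi> i = pvar i" by (auto simp: \<psi>_def Tri_def)
      next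
        fix i assume i: "i \<in> {1..n}"
        show "\<exists>f. in_vars {i + 1..n} f \<and> \<psi> i = padd (pvar i) f"
        proof (cases "i = 1")
          case True then show ?thesis
            by (intro exI[of _ pzero]) (auto simp: \<psi>_def Tri_def in_vars_pzero)
        next
          case False then show ?thesis using i gall
            by (intro exI[of _ "g i"]) (auto simp: \<psi>_def Tri_def)
        qed
      next
        show "bij_betw (subst \<psi>) (A n) (A n)" unfolding \<psi>_def
          by (rule tri_bij) (use gall in auto)
      qed
      then have eq: "comp_end \<phi> \<psi> 1 = comp_end \<psi> \<phi> 1" using comm by simp
      have psi1: "\<psi> 1 = pvar 1" by (simp add: \<psi>_def Tri_def)
      have l: "comp_end \<phi> \<psi> 1 = padd (pvar 1) (F 1)"
        by (simp only: comp_end_def psi1 subst_pvar[OF fphi] phi1)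
      have r: "comp_end \<psi> \<phi> 1 = padd (pvar 1) (subst \<psi> (F 1))"
        by (simp only: comp_end_def phi1 subst_padd[OF fs_pvar fF1 fpsi] subst_pvar[OF fpsi] psi1)
      have "subst \<psi> (F 1) = F 1" using eq l r padd_cancel by metis
      then show ?thesis by (simp add: \<psi>_def Tri_def)
    qed
    show "\<phi> \<in> ?R"
      using F1 inv phi_eq by blast
  qed
next
  show "?R \<subseteq> center_U n"
  proof
    fix \<phi> :: "nat \<Rightarrow> 'k fpoly"
    assume "\<phi> \<in> ?R"
    then obtain f where f: "in_vars {2..n} f"
      and Inv: "\<And>g. ((\<forall>i\<in>{2..n-1}. in_vars {i+1..n} (g i)) \<and> in_vars {} (g n)) \<Longrightarrow>
                 subst (\<lambda>i. if i \<in> {2..n} then padd (pvar i) (g i) else pvar i) f = f"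
      and phi: "\<phi> = (\<lambda>i. if i = 1 then padd (pvar 1) f else pvar i)"
      by blast
    have ff: "fs f" using f by (simp add: in_vars_def)
    have n12: "(1::nat) \<notin> {2..n}" by simp
    have fav: "\<And>w. w \<in> supp f \<Longrightarrow> 1 \<notin> set w" using f n12 unfolding in_vars_def by blast
    have phi1: "\<phi> 1 = padd (pvar 1) f" by (simp add: phi)
    have phiE: "\<phi> = E 1 f" by (simp add: phi E_def fun_eq_iff)
    have fphi: "fs (\<phi> i)" for i by (simp add: phiE fs_E ff)
    have n1: "1 \<in> {1..n}" using assms by auto
    have phiU: "\<phi> \<in> U n"
      unfolding U_def
    proof (intro CollectI conjI ballI allI impI)
      fix i assume "i \<notin> {1..n}" then show "\<phi> i = pvar i" using n1 by (auto simp: phi)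
    next
      fix i assume i: "i \<in> {1..n}"
      show "\<exists>f'. in_vars {i + 1..n} f' \<and> \<phi> i = padd (pvar i) f'"
      proof (cases "i = 1")
        case True then show ?thesis using f by (intro exI[of _ f]) (auto simp: phi numeral_2_eq_2)
      next
        case False then show ?thesis
          by (intro exI[of _ pzero]) (auto simp: phi in_vars_pzero)
      qed
    next
      show "bij_betw (subst \<phi>) (A n) (A n)" unfolding phiE
        by (rule E_bij[where T="{2..n}"]) (use f n1 in auto)
    qed
    have "comp_end \<phi> \<psi> = comp_end \<psi> \<phi>" if psi: "\<psi> \<in> U n" for \<psi>
    proof
      fix i
      obtain G where G: "\<And>i. i \<in> {1..n} \<Longrightarrow> in_vars {i+1..n} (G i) \<and> \<psi> i = padd (pvar i) (G i)"
        using U_get[OF psi] by blast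
      have fpsi: "\<And>i. fs (\<psi> i)" using U_fs[OF psi] .
      show "comp_end \<phi> \<psi> i = comp_end \<psi> \<phi> i"
      proof (cases "i = 1")
        case True
        have G1: "in_vars {2..n} (G 1)" and psi1: "\<psi> 1 = padd (pvar 1) (G 1)" using G[OF n1] by (auto simp: numeral_2_eq_2)
        have fG: "fs (G 1)" using G1 by (simp add: in_vars_def)
        have l: "comp_end \<phi> \<psi> 1 = padd (padd (pvar 1) f) (G 1)"
          unfolding comp_end_def psi1 phiE
          by (rule subst_E_pvar[OF ff G1 n12])
        have "subst \<psi> f = subst (\<lambda>i. if i \<in> {2..n} then padd (pvar i) (G i) else pvar i) f"
        proof (rule subst_cong)
          fix w i assume "w \<in> supp f" "i \<in> set w"
          then have i: "i \<in> {2..n}" using f unfolding in_vars_def by blast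
          then have "i \<in> {1..n}" by auto
          then show "\<psi> i = (if i \<in> {2..n} then padd (pvar i) (G i) else pvar i)" using G i by auto
        qed
        also have "\<dots> = f"
        proof (rule Inv, intro conjI ballI)
          fix i assume "i \<in> {2..n-1}" then show "in_vars {i+1..n} (G i)" using G by auto
        next
          show "in_vars {} (G n)" using G[of n] assms by auto
        qed
        finally have sf: "subst \<psi> f = f" .
        have r: "comp_end \<psi> \<phi> 1 = padd (padd (pvar 1) (G 1)) f"
          by (simp only: comp_end_def phi1 subst_padd[OF fs_pvar ff fpsi] subst_pvar[OF fpsi] psi1 sf)
        show ?thesis using True l r by (simp add: padd_def fun_eq_iff algebra_simps)
      next
        case False
        have av: "\<And>w. w \<in> supp (\<psi> i) \<Longrightarrow> 1 \<notin> set w"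
        proof (cases "i \<in> {1..n}")
          case True
          then have "in_vars {i..n} (\<psi> i)" using G[OF True]
            by (auto intro!: in_vars_padd in_vars_pvar elim: in_vars_mono)
          moreover have "1 \<notin> {i..n}" using True False by auto
          ultimately show "\<And>w. w \<in> supp (\<psi> i) \<Longrightarrow> 1 \<notin> set w" unfolding in_vars_def by blast
        next
          case nT: False
          show "\<And>w. w \<in> supp (\<psi> i) \<Longrightarrow> 1 \<notin> set w" using False U_out[OF psi nT] by auto
        qed
        have "comp_end \<phi> \<psi> i = \<psi> i"
          unfolding comp_end_def by (rule subst_fix[OF fpsi fphi]) (use av in \<open>auto simp: phi\<close>)
        moreover have "comp_end \<psi> \<phi> i = \<psi> i"
          using False by (simp add: comp_end_def phi subst_pvar fpsi)
        ultimately show ?thesis by simp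
      qed
    qed
    then show "\<phi> \<in> center_U n" using phiU by (simp add: center_U_def)
  qed
qed

end
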